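(* Let $\mathcal{M}_1=(\Sigma,\Gamma,\mathcal{H}_1,U^{(1)},M^{(1)})$ and $\mathcal{M}_2=(\Sigma,\Gamma,\mathcal{H}_2,U^{(2)},M^{(2)})$ be QMMs with initial density operators $\rho_1,\rho_2$, let $k$ be a positive integer, $n_1=\dim\mathcal{H}_1$, $n_2=\dim\mathcal{H}_2$ and $n=n_1^2+n_2^2$. Then $(\mathcal{M}_1,\rho_1)\sim_k(\mathcal{M}_2,\rho_2)$ if and only if there exist complex $n\times n$ matrices $F^{(0)},\dots,F^{(k)}$, $A^{(0)}_\sigma,\dots,A^{(k)}_\sigma$ for each $\sigma\in\Sigma$, and $A^{(0)}_\gamma,\dots,A^{(k-1)}_\gamma$ for each $\gamma\in\Gamma$, such that: (1) the first column of $F^{(0)}$ is $\begin{bmatrix}\vec\rho_1\\ \vec\rho_2\end{bmatrix}$; (2) $\eta^\dagger F^{(l)}=0$ for $0\le l\le k$, where $\eta=\begin{bmatrix}\eta_{n_1}\\ -\eta_{n_2}\end{bmatrix}$; (3) for every $\sigma\in\Sigma$ and $0\le l\le k$: $\begin{bmatrix}\hat U^{(1)}_\sigma&0\\0&\hat U^{(2)}_\sigma\end{bmatrix}F^{(l)}=F^{(l)}A^{(l)}_\sigma$; (4) for every $\gamma\in\Gamma$ and $0\le l<k$: $\begin{bmatrix}\hat M^{(1)}_\gamma&0\\0&\hat M^{(2)}_\gamma\end{bmatrix}F^{(l)}=F^{(l+1)}A^{(l)}_\gamma$.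
   Context: A quantum Mealy machine (QMM) is a tuple $\mathcal{M}=(\Sigma,\Gamma,\mathcal{H},U,M)$ where $\Sigma,\Gamma$ are finite alphabets, $\mathcal{H}$ a finite-dimensional complex Hilbert space, $U=\{U_\sigma\}_{\sigma\in\Sigma}$ unitary operators on $\mathcal{H}$, $M=\{M_\gamma\}_{\gamma\in\Gamma}$ linear operators with $\sum_\gamma M_\gamma^\dagger M_\gamma=I$. For a word $a$, $|a|$ is its length, $a[l:r]=a[l]\cdots a[r]$ (empty if $l>r$), $U_a=U_{a[|a|]}\cdots U_{a[1]}$, $U_\epsilon=I$. A scheduler for $a\in\Sigma^*$ is a finite non-decreasing integer sequence $\mathcal{S}=(s_1\le\dots\le s_{|\mathcal{S}|})$ in $\{0,\dots,|a|\}$ (possibly empty). With $s_0=0$, $s_{|\mathcal{S}|+1}=|a|$, $a_i=a[s_{i-1}+1:s_i]$. For $b\in\Gamma^{|\mathcal{S}|}$, $V_{b|a,\mathcal{S}}=U_{a_{|\mathcal{S}|+1}}M_{b_{|\mathcal{S}|}}U_{a_{|\mathcal{S}|}}\cdots M_{b_1}U_{a_1}$ and $\Pr^{\mathcal{M}}_\rho(b|a,\mathcal{S})=\operatorname{tr}(V_{b|a,\mathcal{S}}\rho V_{b|a,\mathcal{S}}^\dagger)$. $(\mathcal{M}_1,\rho_1)\sim_k(\mathcal{M}_2,\rho_2)$ means $\Pr^{\mathcal{M}_1}_{\rho_1}(b|a,\mathcal{S})=\Pr^{\mathcal{M}_2}_{\rho_2}(b|a,\mathcal{S})$ for all $a\in\Sigma^*$,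 schedulers $\mathcal{S}$ for $a$ with $|\mathcal{S}|\le k$, and $b\in\Gamma^{|\mathcal{S}|}$. For a $d\times d$ matrix $\rho$, its vectorization $\vec\rho\in\mathbb{C}^{d^2}$ has entries $\vec\rho_{(i-1)d+j}=\rho_{ij}$; for a $d\times d$ matrix $A$, $\hat A$ is the $d^2\times d^2$ matrix with $\hat A_{(i-1)d+j,(x-1)d+y}=A_{ix}\overline{A_{jy}}$ (so $\overrightarrow{A\rho A^\dagger}=\hat A\vec\rho$); $\eta_d\in\mathbb{C}^{d^2}$ is the vectorization of the trace, $(\eta_d)_{(i-1)d+j}=\delta_{ij}$ (so $\operatorname{tr}\rho=\eta_d^\dagger\vec\rho$). *)

theory Defs
  imports Complex_Main "Jordan_Normal_Form.Matrix"
begin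

(* Hilbert space H = C^d; operators are d x d complex matrices (Jordan_Normal_Form). *)

definition adj :: "complex mat \<Rightarrow> complex mat" where
  "adj A = transpose_mat (map_mat cnj A)"

definition mtrace :: "complex mat \<Rightarrow> complex" where
  "mtrace A = (\<Sum>i<dim_row A. A $$ (i, i))"

definition unitary_op :: "nat \<Rightarrow> complex mat \<Rightarrow> bool" where
  "unitary_op d U \<longleftrightarrow> U \<in> carrier_mat d d \<and> adj U * U = 1\<^sub>m d \<and> U * adj U = 1\<^sub>m d"

definition density_op :: "nat \<Rightarrow> complex mat \<Rightarrow> bool" where
  "density_op d \<rho> \<longleftrightarrow> \<rho> \<in> carrier_mat d d \<and> adj \<rho> = \<rho> \<and>
     (\<forall>v \<in> carrier_vec d. Im (conjugate v \<bullet> (\<rho> *\<^sub>v v)) = 0 \<and> Re (conjugate v \<bullet> (\<rho> *\<^sub>v v)) \<ge> 0) \<and>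
     mtrace \<rho> = 1"

(* A QMM (Sigma, Gamma, C^d, U, M); Sigma and Gamma are the finite types 's and 'g *)
definition qmm :: "nat \<Rightarrow> ('s::finite \<Rightarrow> complex mat) \<Rightarrow> ('g::finite \<Rightarrow> complex mat) \<Rightarrow> bool" where
  "qmm d U M \<longleftrightarrow> (\<forall>\<sigma>. unitary_op d (U \<sigma>)) \<and> (\<forall>\<gamma>. M \<gamma> \<in> carrier_mat d d) \<and>
     (\<forall>i < d. \<forall>j < d. (\<Sum>\<gamma>\<in>UNIV. (adj (M \<gamma>) * M \<gamma>) $$ (i, j)) = (1\<^sub>m d :: complex mat) $$ (i, j))"

fun Uword :: "('s \<Rightarrow> complex mat) \<Rightarrow> nat \<Rightarrow> 's list \<Rightarrow> complex mat" where
  "Uword U d [] = 1\<^sub>m d"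
| "Uword U d (\<sigma> # a) = Uword U d a * U \<sigma>"

(* Vseq U M d a p [(s_i,b_i),...,(s_m,b_m)] = U_{a[s_m+1:|a|]} M_{b_m} ... M_{b_i} U_{a[p+1:s_i]} *)
fun Vseq :: "('s \<Rightarrow> complex mat) \<Rightarrow> ('g \<Rightarrow> complex mat) \<Rightarrow> nat \<Rightarrow> 's list \<Rightarrow> nat \<Rightarrow> (nat \<times> 'g) list \<Rightarrow> complex mat" where
  "Vseq U M d a p [] = Uword U d (drop p a)"
| "Vseq U M d a p ((s, g) # sb) = Vseq U M d a s sb * M g * Uword U d (drop p (take s a))"

definition Vop :: "('s \<Rightarrow> complex mat) \<Rightarrow> ('g \<Rightarrow> complex mat) \<Rightarrow> nat \<Rightarrow> 'g list \<Rightarrow> 's list \<Rightarrow> nat list \<Rightarrow> complex mat" where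
  "Vop U M d b a S = Vseq U M d a 0 (zip S b)"

definition Prob :: "('s \<Rightarrow> complex mat) \<Rightarrow> ('g \<Rightarrow> complex mat) \<Rightarrow> nat \<Rightarrow> complex mat \<Rightarrow> 'g list \<Rightarrow> 's list \<Rightarrow> nat list \<Rightarrow> complex" where
  "Prob U M d \<rho> b a S = mtrace (Vop U M d b a S * \<rho> * adj (Vop U M d b a S))"

definition scheduler :: "'s list \<Rightarrow> nat list \<Rightarrow> bool" where
  "scheduler a S \<longleftrightarrow> sorted S \<and> (\<forall>s \<in> set S. s \<le> length a)"

definition k_equiv :: "nat \<Rightarrow> nat \<Rightarrow> ('s::finite \<Rightarrow> complex mat) \<Rightarrow> ('g::finite \<Rightarrow> complex mat) \<Rightarrow> complex mat \<Rightarrow>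
    nat \<Rightarrow> ('s \<Rightarrow> complex mat) \<Rightarrow> ('g \<Rightarrow> complex mat) \<Rightarrow> complex mat \<Rightarrow> bool" where
  "k_equiv k d1 U1 M1 \<rho>1 d2 U2 M2 \<rho>2 \<longleftrightarrow>
     (\<forall>a S b. scheduler a S \<and> length S \<le> k \<and> length b = length S \<longrightarrow>
        Prob U1 M1 d1 \<rho>1 b a S = Prob U2 M2 d2 \<rho>2 b a S)"

(* vectorization: entry (i-1)d+j (1-based) = rho_ij; 0-based: i*d+j *)
definition vectorize :: "nat \<Rightarrow> complex mat \<Rightarrow> complex vec" where
  "vectorize d \<rho> = vec (d * d) (\<lambda>k. \<rho> $$ (k div d, k mod d))"

(* hat A, with hat A_{(i,j),(x,y)} = A_{ix} * conj(A_{jy}) *)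
definition hat :: "nat \<Rightarrow> complex mat \<Rightarrow> complex mat" where
  "hat d A = mat (d * d) (d * d) (\<lambda>(r, c). A $$ (r div d, c div d) * cnj (A $$ (r mod d, c mod d)))"

definition eta :: "nat \<Rightarrow> complex vec" where
  "eta d = vec (d * d) (\<lambda>k. if k div d = k mod d then 1 else 0)"

definition block_diag :: "complex mat \<Rightarrow> complex mat \<Rightarrow> complex mat" where
  "block_diag A B = four_block_mat A (0\<^sub>m (dim_row A) (dim_col B)) (0\<^sub>m (dim_row B) (dim_col A)) B"

end

theory Submission
  imports Defs "Jordan_Normal_Form.VS_Connect"
begin


lemma exists_basis_mat:
  fixes G :: "complex vec set"
  assumes G: "G \<subseteq> carrier_vec n" and vG: "v \<in> G" and v0: "v \<noteq> 0\<^sub>v n"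
  shows "\<exists>F \<in> carrier_mat n n. col F 0 = v \<and> (\<forall>j<n. col F j \<in> insert (0\<^sub>v n) G)
           \<and> (\<forall>g\<in>G. \<exists>x\<in>carrier_vec n. F *\<^sub>v x = g)"
proof -
  interpret vec_space "TYPE(complex)" n .
  let ?P = "\<lambda>S. S \<subseteq> G \<and> lin_indpt S \<and> v \<in> S"
  have vc: "v \<in> carrier_vec n" using G vG by auto
  have "v \<notin> span {}" using span_empty v0 by simp
  have li0: "lin_indpt {}"
    by (metis (no_types) empty_subsetI fin_dim finite_basis_exists subset_li_is_li vec_vs vectorspace.basis_def)
  hence li1: "lin_indpt {v}"
    using lin_dep_iff_in_span[of "{}" v] vc \<open>v \<notin> span {}\<close> by auto
  have bnd: "finite A \<and> card A \<le> n" if "?P A" for A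
    using li_le_dim[of A] that G fin_dim dim_is_n by auto
  obtain T where fT: "finite T" and mT: "maximal T ?P"
    using maximal_exists[of ?P n "{v}", OF bnd] li1 vG by auto
  have PT: "?P T" using mT unfolding maximal_def by auto
  have Tc: "T \<subseteq> carrier_vec n" using PT G by auto
  have cardT: "card T \<le> n" using bnd PT by auto
  have Gspan: "G \<subseteq> span T"
  proof
    fix g assume g: "g \<in> G"
    show "g \<in> span T"
    proof (rule ccontr)
      assume ns: "g \<notin> span T"
      have gc: "g \<in> carrier_vec n" using g G by auto
      have gT: "g \<notin> T" using ns in_own_span[OF Tc] by auto
      have "lin_indpt (T \<union> {g})" using lin_dep_iff_in_span[OF Tc _ gc gT] PT ns by auto
      hence "?P (T \<union> {g})" using PT g by auto
      hence "T \<union> {g} = T" using mT unfolding maximal_def by blast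
      thus False using gT by auto
    qed
  qed
  obtain ts where ts: "set ts = T - {v}" "distinct ts"
    using finite_distinct_list[of "T - {v}"] fT by auto
  have "card (T - {v}) = card T - 1" using PT fT by (simp add: card_Diff_singleton)
  hence lts: "length ts = card T - 1" using ts distinct_card by metis
  have cT1: "card T \<ge> 1" using PT fT card_0_eq by fastforce
  define cs where "cs = v # ts @ replicate (n - card T) (0\<^sub>v n)"
  have lcs: "length cs = n" unfolding cs_def using lts cardT cT1 by simp
  have csc: "set cs \<subseteq> carrier_vec n" unfolding cs_def using Tc ts vc by auto
  have csT: "set cs \<subseteq> insert (0\<^sub>v n) G" unfolding cs_def using ts PT by auto
  have Tcs: "T \<subseteq> set cs" unfolding cs_def using ts by auto
  define F where "F = mat_of_cols n cs"
  have Fc: "F \<in> carrier_mat n n" unfolding F_def using lcs by auto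
  have colF: "col F j = cs ! j" if "j < n" for j
    unfolding F_def using col_mat_of_cols[of j cs n] that lcs csc nth_mem by (metis subsetD)
  have "n > 0" using lcs cs_def by auto
  have cols: "set (cols F) = set cs" unfolding F_def using cols_mat_of_cols[of cs n] csc by auto
  have "span T \<subseteq> span (set cs)" using span_is_monotone[OF Tcs] by auto
  also have "span (set cs) = col_space F" unfolding col_space_def cols ..
  also have "\<dots> = {y\<in>carrier_vec n. \<exists>x\<in>carrier_vec n. F *\<^sub>v x = y}"
    using col_space_eq[OF Fc] Fc by auto
  finally have rng: "\<forall>g\<in>G. \<exists>x\<in>carrier_vec n. F *\<^sub>v x = g" using Gspan by auto
  have c0: "col F 0 = v" using colF[of 0] \<open>n > 0\<close> by (simp add: cs_def)
  have cj: "\<forall>j<n. col F j \<in> insert (0\<^sub>v n) G"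
  proof (intro allI impI)
    fix j assume j: "j < n"
    have "cs ! j \<in> set cs" using j lcs by simp
    thus "col F j \<in> insert (0\<^sub>v n) G" using colF[OF j] csT by auto
  qed
  show ?thesis using Fc c0 cj rng by blast
qed




lemma solve_mat:
  fixes F' B :: "complex mat"
  assumes F': "F' \<in> carrier_mat n n" and B: "B \<in> carrier_mat n n"
    and h: "\<forall>j<n. \<exists>x\<in>carrier_vec n. F' *\<^sub>v x = col B j"
  shows "\<exists>A \<in> carrier_mat n n. B = F' * A"
proof -
  define xs where "xs j = (SOME x. x \<in> carrier_vec n \<and> F' *\<^sub>v x = col B j)" for j
  have xs: "xs j \<in> carrier_vec n \<and> F' *\<^sub>v xs j = col B j" if "j < n" for j
    unfolding xs_def using someI_ex[of "\<lambda>x. x \<in> carrier_vec n \<and> F' *\<^sub>v x = col B j"] h that by blast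
  define A where "A = mat n n (\<lambda>(i,j). xs j $ i)"
  have colA: "col A j = xs j" if "j < n" for j
    using xs[OF that] that unfolding A_def by (intro eq_vecI) auto
  have "B = F' * A"
  proof (rule eq_matI)
    fix i j assume i: "i < dim_row (F' * A)" and j: "j < dim_col (F' * A)"
    hence i': "i < n" and j': "j < n" using F' unfolding A_def by auto
    have "(F' * A) $$ (i,j) = row F' i \<bullet> col A j" using i' j' F' unfolding A_def by auto
    also have "\<dots> = (F' *\<^sub>v xs j) $ i" using colA[OF j'] i' F' by auto
    also have "\<dots> = B $$ (i,j)" using xs[OF j'] i' j' B by auto
    finally show "B $$ (i,j) = (F' * A) $$ (i,j)" by simp
  qed (insert F' B, auto simp: A_def)
  moreover have "A \<in> carrier_mat n n" unfolding A_def by auto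
  ultimately show ?thesis by blast
qed

lemma sum_sq: fixes f :: "nat \<Rightarrow> 'a::comm_monoid_add" and d :: nat shows "(\<Sum>c<d*d. f c) = (\<Sum>x<d. \<Sum>y<d. f (x*d+y))"
proof -
  have "(\<Sum>c<d*d. f c) = (\<Sum>x<d. sum f {x*d..<x*d+d})" using sum.nat_group[where g=f and k=d and n=d] by simp
  also have "\<dots> = (\<Sum>x<d. \<Sum>y<d. f (x*d+y))"
  proof (rule sum.cong[OF refl])
    fix x
    have "sum f {x*d..<x*d+d} = sum f {0+x*d..<d+x*d}" by (simp add: add.commute)
    also have "\<dots> = (\<Sum>y=0..<d. f (y + x*d))" by (rule sum.shift_bounds_nat_ivl)
    finally show "sum f {x*d..<x*d+d} = (\<Sum>y<d. f (x*d+y))" by (simp add: atLeast0LessThan add.commute)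
  qed
  finally show ?thesis .
qed

lemma divmod_aux: "x < d \<Longrightarrow> y < d \<Longrightarrow> (x*d+y) div (d::nat) = x \<and> (x*d+y) mod d = y"
  by auto

lemma adj_index: "y < dim_col A \<Longrightarrow> j < dim_row A \<Longrightarrow> adj A $$ (y,j) = cnj (A $$ (j,y))"
  unfolding adj_def by auto

lemma dim_adj[simp]: "dim_row (adj A) = dim_col A" "dim_col (adj A) = dim_row A"
  unfolding adj_def by auto

lemma adj_carrier: "A \<in> carrier_mat n m \<Longrightarrow> adj A \<in> carrier_mat m n"
  unfolding adj_def by auto

lemma vec_hat:
  assumes A: "A \<in> carrier_mat d d" and X: "X \<in> carrier_mat d d"
  shows "vectorize d (A * X * adj A) = hat d A *\<^sub>v vectorize d X"
proof (rule eq_vecI)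
  show "dim_vec (vectorize d (A * X * adj A)) = dim_vec (hat d A *\<^sub>v vectorize d X)"
    unfolding vectorize_def hat_def by simp
  fix k assume "k < dim_vec (hat d A *\<^sub>v vectorize d X)"
  hence k: "k < d*d" unfolding hat_def by simp
  define i where "i = k div d"
  define j where "j = k mod d"
  have dpos: "d > 0" using k by (cases d) auto
  have i: "i < d" unfolding i_def using k by (simp add: less_mult_imp_div_less)
  have j: "j < d" unfolding j_def using dpos by simp
  have "vectorize d (A * X * adj A) $ k = (A * X * adj A) $$ (i,j)"
    unfolding vectorize_def i_def j_def using k by simp
  also have "\<dots> = (\<Sum>y<d. (A*X) $$ (i,y) * adj A $$ (y,j))"
    using A X i j by (simp add: scalar_prod_def atLeast0LessThan)
  also have "\<dots> = (\<Sum>y<d. (\<Sum>x<d. A $$ (i,x) * X $$ (x,y)) * cnj (A $$ (j,y)))"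
    using A X i j by (intro sum.cong refl) (simp add: scalar_prod_def adj_index atLeast0LessThan)
  also have "\<dots> = (\<Sum>y<d. \<Sum>x<d. A $$ (i,x) * cnj (A $$ (j,y)) * X $$ (x,y))"
    by (auto simp: sum_distrib_right intro!: sum.cong)
  also have "\<dots> = (\<Sum>x<d. \<Sum>y<d. A $$ (i,x) * cnj (A $$ (j,y)) * X $$ (x,y))"
    by (rule sum.swap)
  also have "\<dots> = (\<Sum>c<d*d. A $$ (i, c div d) * cnj (A $$ (j, c mod d)) * X $$ (c div d, c mod d))"
    unfolding sum_sq by (intro sum.cong refl) (simp add: divmod_aux)
  also have "\<dots> = (hat d A *\<^sub>v vectorize d X) $ k"
    using k by (simp add: hat_def vectorize_def scalar_prod_def atLeast0LessThan i_def j_def)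
  finally show "vectorize d (A * X * adj A) $ k = (hat d A *\<^sub>v vectorize d X) $ k" .
qed

lemma eta_trace:
  assumes A: "A \<in> carrier_mat d d"
  shows "conjugate (eta d) \<bullet> vectorize d A = mtrace A"
proof -
  have "conjugate (eta d) \<bullet> vectorize d A = (\<Sum>c<d*d. (if c div d = c mod d then 1 else 0) * A $$ (c div d, c mod d))"
    by (simp add: eta_def vectorize_def scalar_prod_def atLeast0LessThan, intro sum.cong refl, auto)
  also have "\<dots> = (\<Sum>x<d. \<Sum>y<d. (if x = y then 1 else 0) * A $$ (x, y))"
    unfolding sum_sq by (intro sum.cong refl) (simp add: divmod_aux)
  also have "\<dots> = (\<Sum>x<d. A $$ (x, x))"
    by (simp add: if_distrib[of "\<lambda>t. t * _"] cong: if_cong)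
  also have "\<dots> = mtrace A" unfolding mtrace_def using A by simp
  finally show ?thesis .
qed




lemma mult_dd[intro]: "A \<in> carrier_mat d d \<Longrightarrow> B \<in> carrier_mat d d \<Longrightarrow> A * B \<in> carrier_mat d d"
  by (rule mult_carrier_mat)
lemma one_l[simp]: "(A::complex mat) \<in> carrier_mat d n \<Longrightarrow> 1\<^sub>m d * A = A" by (rule left_mult_one_mat)
lemma one_r[simp]: "(A::complex mat) \<in> carrier_mat n d \<Longrightarrow> A * 1\<^sub>m d = A" by (rule right_mult_one_mat)

fun ev :: "('s \<Rightarrow> complex mat) \<Rightarrow> ('g \<Rightarrow> complex mat) \<Rightarrow> nat \<Rightarrow> ('s + 'g) list \<Rightarrow> complex mat" where
  "ev U M d [] = 1\<^sub>m d"
| "ev U M d (Inl s # h) = U s * ev U M d h"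
| "ev U M d (Inr g # h) = M g * ev U M d h"

fun nm :: "('s + 'g) list \<Rightarrow> nat" where
  "nm [] = 0"
| "nm (Inl s # h) = nm h"
| "nm (Inr g # h) = Suc (nm h)"

definition good :: "('s \<Rightarrow> complex mat) \<Rightarrow> ('g \<Rightarrow> complex mat) \<Rightarrow> nat \<Rightarrow> bool" where
  "good U M d \<longleftrightarrow> (\<forall>s. U s \<in> carrier_mat d d) \<and> (\<forall>g. M g \<in> carrier_mat d d)"

lemma ev_carrier: "good U M d \<Longrightarrow> ev U M d h \<in> carrier_mat d d"
  by (induction U M d h rule: ev.induct) (auto simp: good_def intro!: mult_dd)

lemma ev_append: "good U M d \<Longrightarrow> ev U M d (h1 @ h2) = ev U M d h1 * ev U M d h2"
proof (induction U M d h1 rule: ev.induct)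
  case (1 U M d) thus ?case using ev_carrier[of U M d h2] by simp
next
  case (2 U M d s h) thus ?case using ev_carrier[of U M d h] ev_carrier[of U M d h2]
    by (simp add: good_def assoc_mult_mat[of _ d d _ d _ d])
next
  case (3 U M d g h) thus ?case using ev_carrier[of U M d h] ev_carrier[of U M d h2]
    by (simp add: good_def assoc_mult_mat[of _ d d _ d _ d])
qed

lemma nm_append: "nm (h1 @ h2) = nm h1 + nm h2"
  by (induction h1 rule: nm.induct) auto

definition hw :: "'s list \<Rightarrow> ('s + 'g) list" where
  "hw w = rev (map Inl w)"

lemma nm_hw: "nm (hw w) = 0"
  unfolding hw_def by (induction w) (auto simp: nm_append)

lemma Uword_carrier: "good U M d \<Longrightarrow> Uword U d w \<in> carrier_mat d d"
  by (induction w) (auto simp: good_def intro!: mult_dd)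

lemma Uword_hw: "good U M d \<Longrightarrow> Uword U d w = ev U M d (hw w)"
proof (induction w)
  case Nil thus ?case by (simp add: hw_def)
next
  case (Cons s w)
  have "ev U M d (hw (s # w)) = ev U M d (hw w) * ev U M d [Inl s]"
    unfolding hw_def using Cons.prems by (simp add: ev_append)
  also have "\<dots> = Uword U d w * U s" using Cons by (simp add: good_def, subst one_r, auto)
  finally show ?case by simp
qed

fun hist_of :: "'s list \<Rightarrow> nat \<Rightarrow> (nat \<times> 'g) list \<Rightarrow> ('s + 'g) list" where
  "hist_of a p [] = hw (drop p a)"
| "hist_of a p ((s, g) # sb) = hist_of a s sb @ [Inr g] @ hw (drop p (take s a))"

lemma nm_hist_of: "nm (hist_of a p sb) = length sb"
  by (induction a p sb rule: hist_of.induct) (auto simp: nm_append nm_hw)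

lemma Vseq_carrier: "good U M d \<Longrightarrow> Vseq U M d a p sb \<in> carrier_mat d d"
  by (induction U M d a p sb rule: Vseq.induct) (auto simp: good_def Uword_carrier intro!: mult_dd)

lemma Vseq_hist: "good U M d \<Longrightarrow> Vseq U M d a p sb = ev U M d (hist_of a p sb)"
proof (induction U M d a p sb rule: Vseq.induct)
  case (1 U M d a p) thus ?case by (simp add: Uword_hw)
next
  case (2 U M d a p s g sb)
  have c1: "ev U M d (hist_of a s sb) \<in> carrier_mat d d" using 2 ev_carrier by auto
  have c2: "M g \<in> carrier_mat d d" using 2 by (auto simp: good_def intro!: mult_dd)
  have c3: "ev U M d (hw (drop p (take s a))) \<in> carrier_mat d d" using 2 ev_carrier by auto
  show ?case using 2 c1 c2 c3 by (simp add: ev_append Uword_hw)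
qed

lemma Uword_snoc: assumes gd: "good U M d" shows "Uword U d (w @ [s]) = U s * Uword U d w"
proof (induction w)
  case Nil have "U s \<in> carrier_mat d d" using gd by (simp add: good_def)
  thus ?case by simp
next
  case (Cons x w)
  have "U x \<in> carrier_mat d d" "U s \<in> carrier_mat d d" using gd by (auto simp: good_def)
  thus ?case using Cons Uword_carrier[OF gd, of w] by (simp add: assoc_mult_mat[of _ d d _ d _ d])
qed

lemma Vseq_snoc_U:
  assumes gd: "good U M d" and "\<forall>x \<in> set sb. fst x \<le> length a" "p \<le> length a"
  shows "Vseq U M d (a @ [s]) p sb = U s * Vseq U M d a p sb"
  using assms(2,3)
proof (induction sb arbitrary: p)
  case Nil thus ?case by (simp add: Uword_snoc[OF gd])
next
  case (Cons x sb)
  obtain t g where x: "x = (t, g)" by (cases x)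
  have t: "t \<le> length a" using Cons.prems x by auto
  have IH: "Vseq U M d (a @ [s]) t sb = U s * Vseq U M d a t sb" using Cons t by auto
  have tk: "take t (a @ [s]) = take t a" using t by simp
  have c: "U s \<in> carrier_mat d d" "M g \<in> carrier_mat d d" "Vseq U M d a t sb \<in> carrier_mat d d"
    "Uword U d (drop p (take t a)) \<in> carrier_mat d d"
    using gd Vseq_carrier[OF gd] Uword_carrier[OF gd] by (auto simp: good_def)
  show ?case unfolding x Vseq.simps tk IH using c by (simp add: assoc_mult_mat[of _ d d _ d _ d])
qed

lemma Vseq_snoc_M:
  assumes gd: "good U M d"
  shows "Vseq U M d a p (sb @ [(length a, g)]) = M g * Vseq U M d a p sb"
proof (induction sb arbitrary: p)
  case Nil
  have c: "M g \<in> carrier_mat d d" "Uword U d (drop p a) \<in> carrier_mat d d"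
    using gd Uword_carrier[OF gd] by (auto simp: good_def)
  thus ?case by simp
next
  case (Cons x sb)
  obtain t g' where x: "x = (t, g')" by (cases x)
  have c: "M g \<in> carrier_mat d d" "M g' \<in> carrier_mat d d" "Vseq U M d a t sb \<in> carrier_mat d d"
    "Uword U d (drop p (take t a)) \<in> carrier_mat d d"
    using gd Vseq_carrier[OF gd] Uword_carrier[OF gd] by (auto simp: good_def)
  show ?case using c Cons by (simp add: x assoc_mult_mat[of _ d d _ d _ d])
qed

lemma hist_realized:
  "\<exists>a S b. scheduler a S \<and> length S = nm h \<and> length b = nm h \<and>
     (\<forall>(U :: 's \<Rightarrow> complex mat) (M :: 'g \<Rightarrow> complex mat) d. good U M d \<longrightarrow> Vop U M d b a S = ev U M d h)"
proof (induction h rule: nm.induct)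
  case 1
  show ?case by (rule exI[of _ "[]"], rule exI[of _ "[]"], rule exI[of _ "[]"])
     (simp add: scheduler_def Vop_def)
next
  case (2 s h)
  then obtain a S b where h: "scheduler a S" "length S = nm h" "length b = nm h"
    "\<forall>(U :: 's \<Rightarrow> complex mat) (M :: 'g \<Rightarrow> complex mat) d. good U M d \<longrightarrow> Vop U M d b a S = ev U M d h" by blast
  have sch: "scheduler (a @ [s]) S" using h(1) unfolding scheduler_def by auto
  have fs: "\<forall>x \<in> set (zip S b). fst x \<le> length a" using h(1) unfolding scheduler_def
    by (auto dest: set_zip_leftD)
  show ?case
    apply (rule exI[of _ "a @ [s]"], rule exI[of _ S], rule exI[of _ b])
    using sch h fs by (auto simp: Vop_def Vseq_snoc_U)
next
  case (3 g h)
  then obtain a S b where h: "scheduler a S" "length S = nm h" "length b = nm h"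
    "\<forall>(U :: 's \<Rightarrow> complex mat) (M :: 'g \<Rightarrow> complex mat) d. good U M d \<longrightarrow> Vop U M d b a S = ev U M d h" by blast
  have sch: "scheduler a (S @ [length a])" using h(1) unfolding scheduler_def
    by (auto simp: sorted_append)
  have z: "zip (S @ [length a]) (b @ [g]) = zip S b @ [(length a, g)]" using h by simp
  show ?case
    apply (rule exI[of _ a], rule exI[of _ "S @ [length a]"], rule exI[of _ "b @ [g]"])
    using sch h z by (auto simp: Vop_def Vseq_snoc_M)
qed




lemma adj_mult:
  assumes A: "A \<in> carrier_mat m k" and B: "B \<in> carrier_mat k l"
  shows "adj (A * B) = adj B * adj A"
proof (rule eq_matI)
  fix i j assume i: "i < dim_row (adj B * adj A)" and j: "j < dim_col (adj B * adj A)"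
  hence i': "i < l" and j': "j < m" using A B by auto
  have "adj (A * B) $$ (i,j) = cnj ((A*B) $$ (j,i))" using A B i' j' by (simp add: adj_index)
  also have "\<dots> = cnj (\<Sum>x<k. A $$ (j,x) * B $$ (x,i))"
    using A B i' j' by (simp add: scalar_prod_def atLeast0LessThan)
  also have "\<dots> = (\<Sum>x<k. cnj (B $$ (x,i)) * cnj (A $$ (j,x)))"
    by (simp add: mult.commute)
  also have "\<dots> = (adj B * adj A) $$ (i,j)"
    using A B i' j' by (simp add: scalar_prod_def atLeast0LessThan adj_index)
  finally show "adj (A * B) $$ (i,j) = (adj B * adj A) $$ (i,j)" .
qed (insert A B, auto)

lemma adj_one: "adj (1\<^sub>m d) = (1\<^sub>m d :: complex mat)"
  by (rule eq_matI) (auto simp: adj_index)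

lemma hat_carrier[simp]: "hat d A \<in> carrier_mat (d*d) (d*d)"
  unfolding hat_def by simp

lemma vectorize_carrier[simp]: "vectorize d X \<in> carrier_vec (d*d)"
  unfolding vectorize_def by simp

lemma vectorize_dim[simp]: "dim_vec (vectorize d X) = d*d"
  unfolding vectorize_def by simp

lemma vstep:
  assumes A: "A \<in> carrier_mat d d" and E: "E \<in> carrier_mat d d" and R: "R \<in> carrier_mat d d"
  shows "vectorize d ((A*E) * R * adj (A*E)) = hat d A *\<^sub>v vectorize d (E * R * adj E)"
proof -
  have aE: "adj E \<in> carrier_mat d d" and aA: "adj A \<in> carrier_mat d d" using A E adj_carrier by auto
  have "(A*E) * R * adj (A*E) = A * (E * R * adj E) * adj A"
    using A E R aE aA by (simp add: adj_mult[OF A E] assoc_mult_mat[of _ d d _ d _ d] mult_carrier_mat)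
  thus ?thesis using vec_hat[OF A, of "E * R * adj E"] A E R aE by auto
qed

lemma block_mult_vec:
  assumes X: "X \<in> carrier_mat a a" and Y: "Y \<in> carrier_mat b b"
    and u: "u \<in> carrier_vec a" and v: "v \<in> carrier_vec b"
  shows "block_diag X Y *\<^sub>v (u @\<^sub>v v) = (X *\<^sub>v u) @\<^sub>v (Y *\<^sub>v v)"
proof -
  have "block_diag X Y *\<^sub>v (u @\<^sub>v v) = (X *\<^sub>v u + 0\<^sub>m a b *\<^sub>v v) @\<^sub>v (0\<^sub>m b a *\<^sub>v u + Y *\<^sub>v v)"
    unfolding block_diag_def using X Y u v
    by (subst four_block_mat_mult_vec[OF X _ _ Y u v]) auto
  also have "\<dots> = (X *\<^sub>v u) @\<^sub>v (Y *\<^sub>v v)" using X Y u v by auto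
  finally show ?thesis .
qed

lemma block_carrier[simp]: "X \<in> carrier_mat a a \<Longrightarrow> Y \<in> carrier_mat b b \<Longrightarrow> block_diag X Y \<in> carrier_mat (a+b) (a+b)"
  unfolding block_diag_def by auto

lemma eta_carrier[simp]: "eta d \<in> carrier_vec (d*d)" unfolding eta_def by simp
lemma eta_dim[simp]: "dim_vec (eta d) = d*d" unfolding eta_def by simp

lemma conj_eta: "conjugate (eta d) = eta d"
  by (rule eq_vecI) (auto simp: eta_def)

lemma conj_eta2: "conjugate (eta d1 @\<^sub>v - eta d2) = eta d1 @\<^sub>v - eta d2"
  by (rule eq_vecI) (auto simp: eta_def)

lemma eta2_prod:
  assumes A: "A \<in> carrier_mat d1 d1" and B: "B \<in> carrier_mat d2 d2"
  shows "conjugate (eta d1 @\<^sub>v - eta d2) \<bullet> (vectorize d1 A @\<^sub>v vectorize d2 B) = mtrace A - mtrace B"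
proof -
  have "conjugate (eta d1 @\<^sub>v - eta d2) \<bullet> (vectorize d1 A @\<^sub>v vectorize d2 B)
     = eta d1 \<bullet> vectorize d1 A + (- eta d2) \<bullet> vectorize d2 B"
    unfolding conj_eta2 by (rule scalar_prod_append) (auto simp: eta_def)
  also have "\<dots> = mtrace A - mtrace B"
    using eta_trace[OF A, unfolded conj_eta] eta_trace[OF B, unfolded conj_eta] by simp
  finally show ?thesis .
qed

lemma col_unit: "(A :: complex mat) \<in> carrier_mat m n \<Longrightarrow> j < n \<Longrightarrow> A *\<^sub>v unit_vec n j = col A j"
proof (rule eq_vecI)
  fix i assume "A \<in> carrier_mat m n" "j < n" "i < dim_vec (col A j)"
  hence i: "i < m" by auto
  have "row A i \<bullet> unit_vec n j = (\<Sum>x\<in>{0..<n}. row A i $ x * (if x = j then 1 else 0))"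
    using \<open>j < n\<close> unfolding scalar_prod_def by (intro sum.cong) auto
  also have "\<dots> = row A i $ j" using \<open>j < n\<close> by (simp add: if_distrib[of "\<lambda>t. _ * t"] cong: if_cong)
  finally show "(A *\<^sub>v unit_vec n j) $ i = col A j $ i" using i \<open>A \<in> carrier_mat m n\<close> \<open>j < n\<close> by simp
qed auto




lemma exists_basis_mat2:
  fixes G :: "complex vec set"
  assumes G: "G \<subseteq> carrier_vec n"
  shows "\<exists>F \<in> carrier_mat n n. (\<forall>j<n. col F j \<in> insert (0\<^sub>v n) G)
           \<and> (\<forall>g\<in>G. \<exists>x\<in>carrier_vec n. F *\<^sub>v x = g)"
proof (cases "\<exists>v\<in>G. v \<noteq> 0\<^sub>v n")
  case True
  then obtain v where "v \<in> G" "v \<noteq> 0\<^sub>v n" by auto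
  from exists_basis_mat[OF G this] show ?thesis by blast
next
  case False
  hence z: "\<forall>g\<in>G. g = 0\<^sub>v n" by auto
  have zz: "0\<^sub>m n n *\<^sub>v 0\<^sub>v n = 0\<^sub>v n" by (rule eq_vecI) auto
  have "\<forall>g\<in>G. \<exists>x\<in>carrier_vec n. 0\<^sub>m n n *\<^sub>v x = g"
  proof
    fix g assume "g \<in> G"
    hence "g = 0\<^sub>v n" using z by auto
    thus "\<exists>x\<in>carrier_vec n. 0\<^sub>m n n *\<^sub>v x = g" using zz by (intro bexI[of _ "0\<^sub>v n"]) auto
  qed
  thus ?thesis using z by (intro bexI[of _ "0\<^sub>m n n"]) auto
qed

locale two =
  fixes U1 :: "'s::finite \<Rightarrow> complex mat" and M1 :: "'g::finite \<Rightarrow> complex mat" and n1 :: nat and \<rho>1 :: "complex mat"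
    and U2 :: "'s \<Rightarrow> complex mat" and M2 :: "'g \<Rightarrow> complex mat" and n2 :: nat and \<rho>2 :: "complex mat"
  assumes g1: "good U1 M1 n1" and g2: "good U2 M2 n2"
    and r1: "\<rho>1 \<in> carrier_mat n1 n1" and r2: "\<rho>2 \<in> carrier_mat n2 n2"
    and tr1: "mtrace \<rho>1 = 1"
begin

definition W where "W \<sigma> = block_diag (hat n1 (U1 \<sigma>)) (hat n2 (U2 \<sigma>))"
definition N where "N \<gamma> = block_diag (hat n1 (M1 \<gamma>)) (hat n2 (M2 \<gamma>))"
definition Phi where "Phi h = vectorize n1 (ev U1 M1 n1 h * \<rho>1 * adj (ev U1 M1 n1 h))
   @\<^sub>v vectorize n2 (ev U2 M2 n2 h * \<rho>2 * adj (ev U2 M2 n2 h))"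
definition eta2 where "eta2 = eta n1 @\<^sub>v - eta n2"

lemma nn: "n1^2 + n2^2 = n1*n1 + n2*n2" by (simp add: power2_eq_square)

lemma W_carrier: "W \<sigma> \<in> carrier_mat (n1^2+n2^2) (n1^2+n2^2)"
  unfolding W_def nn by (rule block_carrier) auto

lemma N_carrier: "N \<gamma> \<in> carrier_mat (n1^2+n2^2) (n1^2+n2^2)"
  unfolding N_def nn by (rule block_carrier) auto

lemma Phi_carrier: "Phi h \<in> carrier_vec (n1^2+n2^2)"
  unfolding Phi_def nn by (rule append_carrier_vec) auto

lemma E1: "ev U1 M1 n1 h \<in> carrier_mat n1 n1" using ev_carrier[OF g1] .
lemma E2: "ev U2 M2 n2 h \<in> carrier_mat n2 n2" using ev_carrier[OF g2] .

lemma Phi_L: "Phi (Inl \<sigma> # h) = W \<sigma> *\<^sub>v Phi h"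
proof -
  have u1: "U1 \<sigma> \<in> carrier_mat n1 n1" and u2: "U2 \<sigma> \<in> carrier_mat n2 n2"
    using g1 g2 by (auto simp: good_def)
  show ?thesis unfolding Phi_def W_def ev.simps
    using vstep[OF u1 E1 r1] vstep[OF u2 E2 r2]
    by (simp add: block_mult_vec[OF hat_carrier hat_carrier vectorize_carrier vectorize_carrier])
qed

lemma Phi_R: "Phi (Inr \<gamma> # h) = N \<gamma> *\<^sub>v Phi h"
proof -
  have u1: "M1 \<gamma> \<in> carrier_mat n1 n1" and u2: "M2 \<gamma> \<in> carrier_mat n2 n2"
    using g1 g2 by (auto simp: good_def)
  show ?thesis unfolding Phi_def N_def ev.simps
    using vstep[OF u1 E1 r1] vstep[OF u2 E2 r2]
    by (simp add: block_mult_vec[OF hat_carrier hat_carrier vectorize_carrier vectorize_carrier])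
qed

lemma Phi_nil: "Phi [] = vectorize n1 \<rho>1 @\<^sub>v vectorize n2 \<rho>2"
  unfolding Phi_def using r1 r2 by (simp add: adj_one)

lemma eta_Phi: "conjugate eta2 \<bullet> Phi h =
   mtrace (ev U1 M1 n1 h * \<rho>1 * adj (ev U1 M1 n1 h)) - mtrace (ev U2 M2 n2 h * \<rho>2 * adj (ev U2 M2 n2 h))"
proof -
  have c1: "ev U1 M1 n1 h * \<rho>1 * adj (ev U1 M1 n1 h) \<in> carrier_mat n1 n1"
    using E1 r1 adj_carrier[OF E1] by (intro mult_dd) auto
  have c2: "ev U2 M2 n2 h * \<rho>2 * adj (ev U2 M2 n2 h) \<in> carrier_mat n2 n2"
    using E2 r2 adj_carrier[OF E2] by (intro mult_dd) auto
  show ?thesis unfolding eta2_def Phi_def by (rule eta2_prod[OF c1 c2])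
qed

lemma Phi_nil_nz: "Phi [] \<noteq> 0\<^sub>v (n1^2+n2^2)"
proof
  assume z: "Phi [] = 0\<^sub>v (n1^2+n2^2)"
  have "(eta n1 @\<^sub>v 0\<^sub>v (n2*n2)) \<bullet> Phi [] = eta n1 \<bullet> vectorize n1 \<rho>1 + 0\<^sub>v (n2*n2) \<bullet> vectorize n2 \<rho>2"
    unfolding Phi_nil by (rule scalar_prod_append[of "eta n1" "n1*n1" "0\<^sub>v (n2*n2)" "n2*n2" "vectorize n1 \<rho>1" "vectorize n2 \<rho>2"]) auto
  also have "\<dots> = 1" using eta_trace[OF r1, unfolded conj_eta] tr1 by simp
  finally have "(eta n1 @\<^sub>v 0\<^sub>v (n2*n2)) \<bullet> Phi [] = 1" .
  moreover have "(eta n1 @\<^sub>v 0\<^sub>v (n2*n2)) \<bullet> Phi [] = 0" unfolding z nn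
    by (rule scalar_prod_right_zero) auto
  ultimately show False by simp
qed

lemma keq_iff: "k_equiv k n1 U1 M1 \<rho>1 n2 U2 M2 \<rho>2 \<longleftrightarrow> (\<forall>h. nm h \<le> k \<longrightarrow> conjugate eta2 \<bullet> Phi h = 0)"
proof
  assume ke: "k_equiv k n1 U1 M1 \<rho>1 n2 U2 M2 \<rho>2"
  show "\<forall>h. nm h \<le> k \<longrightarrow> conjugate eta2 \<bullet> Phi h = 0"
  proof (intro allI impI)
    fix h :: "('s + 'g) list" assume hk: "nm h \<le> k"
    obtain a S b where h: "scheduler a S" "length S = nm h" "length b = nm h"
      "\<forall>(U :: 's \<Rightarrow> complex mat) (M :: 'g \<Rightarrow> complex mat) d. good U M d \<longrightarrow> Vop U M d b a S = ev U M d h"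
      using hist_realized[of h] by blast
    have "Prob U1 M1 n1 \<rho>1 b a S = Prob U2 M2 n2 \<rho>2 b a S"
      using ke h hk unfolding k_equiv_def by auto
    thus "conjugate eta2 \<bullet> Phi h = 0" unfolding eta_Phi Prob_def using h(4) g1 g2 by auto
  qed
next
  assume o: "\<forall>h. nm h \<le> k \<longrightarrow> conjugate eta2 \<bullet> Phi h = 0"
  show "k_equiv k n1 U1 M1 \<rho>1 n2 U2 M2 \<rho>2" unfolding k_equiv_def
  proof (intro allI impI)
    fix a :: "'s list" and S and b :: "'g list"
    assume asm: "scheduler a S \<and> length S \<le> k \<and> length b = length S"
    let ?h = "hist_of a 0 (zip S b) :: ('s + 'g) list"
    have "nm ?h \<le> k" using asm by (simp add: nm_hist_of)
    hence "conjugate eta2 \<bullet> Phi ?h = 0" using o by auto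
    thus "Prob U1 M1 n1 \<rho>1 b a S = Prob U2 M2 n2 \<rho>2 b a S"
      unfolding eta_Phi Prob_def Vop_def using Vseq_hist[OF g1] Vseq_hist[OF g2] by simp
  qed
qed

end



lemma row_zero_prod:
  assumes F: "F \<in> carrier_mat n n" and c: "c \<in> carrier_vec n" and x: "x \<in> carrier_vec n"
    and z: "mat_of_row c * F = 0\<^sub>m 1 n"
  shows "c \<bullet> (F *\<^sub>v x) = (0::complex)"
proof -
  have "c \<bullet> (F *\<^sub>v x) = (mat_of_row c *\<^sub>v (F *\<^sub>v x)) $ 0" by simp
  also have "\<dots> = ((mat_of_row c * F) *\<^sub>v x) $ 0"
    using F c x by (subst assoc_mult_mat_vec[of _ 1 n _ n]) auto
  also have "\<dots> = 0" unfolding z using x by simp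
  finally show ?thesis .
qed

context two begin

lemma nq_pos: "n1^2 + n2^2 > 0"
proof (rule ccontr)
  assume "\<not> n1^2 + n2^2 > 0"
  hence "n1^2 + n2^2 = 0" by simp
  hence "Phi [] = 0\<^sub>v (n1^2+n2^2)" using Phi_carrier[of "[]"] by (intro eq_vecI) auto
  thus False using Phi_nil_nz by simp
qed

lemma main_iff:
  "(\<forall>h. nm h \<le> k \<longrightarrow> conjugate eta2 \<bullet> Phi h = 0) \<longleftrightarrow>
     (\<exists>(F :: nat \<Rightarrow> complex mat) (AS :: nat \<Rightarrow> 's \<Rightarrow> complex mat) (AG :: nat \<Rightarrow> 'g \<Rightarrow> complex mat).
       (\<forall>l \<le> k. F l \<in> carrier_mat (n1^2 + n2^2) (n1^2 + n2^2)) \<and>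
       (\<forall>l \<le> k. \<forall>\<sigma>. AS l \<sigma> \<in> carrier_mat (n1^2 + n2^2) (n1^2 + n2^2)) \<and>
       (\<forall>l < k. \<forall>\<gamma>. AG l \<gamma> \<in> carrier_mat (n1^2 + n2^2) (n1^2 + n2^2)) \<and>
       col (F 0) 0 = vectorize n1 \<rho>1 @\<^sub>v vectorize n2 \<rho>2 \<and>
       (\<forall>l \<le> k. mat_of_row (conjugate (eta n1 @\<^sub>v (- eta n2))) * F l = 0\<^sub>m 1 (n1^2 + n2^2)) \<and>
       (\<forall>\<sigma>. \<forall>l \<le> k. block_diag (hat n1 (U1 \<sigma>)) (hat n2 (U2 \<sigma>)) * F l = F l * AS l \<sigma>) \<and>
       (\<forall>\<gamma>. \<forall>l < k. block_diag (hat n1 (M1 \<gamma>)) (hat n2 (M2 \<gamma>)) * F l = F (Suc l) * AG l \<gamma>))"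
  (is "?L \<longleftrightarrow> ?R")
proof
  assume ?R
  then obtain F AS AG where
    cF: "\<forall>l \<le> k. F l \<in> carrier_mat (n1^2 + n2^2) (n1^2 + n2^2)" and
    cAS: "\<forall>l \<le> k. \<forall>\<sigma>. AS l \<sigma> \<in> carrier_mat (n1^2 + n2^2) (n1^2 + n2^2)" and
    cAG: "\<forall>l < k. \<forall>\<gamma>. AG l \<gamma> \<in> carrier_mat (n1^2 + n2^2) (n1^2 + n2^2)" and
    c0: "col (F 0) 0 = vectorize n1 \<rho>1 @\<^sub>v vectorize n2 \<rho>2" and
    ce: "\<forall>l \<le> k. mat_of_row (conjugate (eta n1 @\<^sub>v (- eta n2))) * F l = 0\<^sub>m 1 (n1^2 + n2^2)" and
    cW0: "\<forall>\<sigma>. \<forall>l \<le> k. block_diag (hat n1 (U1 \<sigma>)) (hat n2 (U2 \<sigma>)) * F l = F l * AS l \<sigma>" and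
    cN0: "\<forall>\<gamma>. \<forall>l < k. block_diag (hat n1 (M1 \<gamma>)) (hat n2 (M2 \<gamma>)) * F l = F (Suc l) * AG l \<gamma>"
    by - (elim exE conjE, rule that, assumption+)
  have cW: "\<forall>\<sigma>. \<forall>l \<le> k. W \<sigma> * F l = F l * AS l \<sigma>" using cW0 unfolding W_def .
  have cN: "\<forall>\<gamma>. \<forall>l < k. N \<gamma> * F l = F (Suc l) * AG l \<gamma>" using cN0 unfolding N_def .
  have reach: "nm h \<le> k \<Longrightarrow> \<exists>x\<in>carrier_vec (n1^2 + n2^2). Phi h = F (nm h) *\<^sub>v x" for h
  proof (induction h rule: nm.induct)
    case 1
    have "F 0 *\<^sub>v unit_vec (n1^2 + n2^2) 0 = col (F 0) 0"
      using cF nq_pos by (intro col_unit) auto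
    thus ?case using c0 Phi_nil by (intro bexI[of _ "unit_vec (n1^2 + n2^2) 0"]) auto
  next
    case (2 \<sigma> h)
    hence l: "nm h \<le> k" by simp
    then obtain x where x: "x \<in> carrier_vec (n1^2 + n2^2)" "Phi h = F (nm h) *\<^sub>v x" using 2 by auto
    have Fc: "F (nm h) \<in> carrier_mat (n1^2 + n2^2) (n1^2 + n2^2)" using cF l by auto
    have Ac: "AS (nm h) \<sigma> \<in> carrier_mat (n1^2 + n2^2) (n1^2 + n2^2)" using cAS l by auto
    have "Phi (Inl \<sigma> # h) = W \<sigma> *\<^sub>v (F (nm h) *\<^sub>v x)" using Phi_L x by simp
    also have "\<dots> = (W \<sigma> * F (nm h)) *\<^sub>v x" using W_carrier Fc x by (subst assoc_mult_mat_vec) auto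
    also have "\<dots> = (F (nm h) * AS (nm h) \<sigma>) *\<^sub>v x" using cW l by simp
    also have "\<dots> = F (nm h) *\<^sub>v (AS (nm h) \<sigma> *\<^sub>v x)" using Ac Fc x by (subst assoc_mult_mat_vec) auto
    finally show ?case using Ac x by (intro bexI[of _ "AS (nm h) \<sigma> *\<^sub>v x"]) auto
  next
    case (3 \<gamma> h)
    hence l: "nm h < k" by simp
    then obtain x where x: "x \<in> carrier_vec (n1^2 + n2^2)" "Phi h = F (nm h) *\<^sub>v x" using 3 by auto
    have Fc: "F (nm h) \<in> carrier_mat (n1^2 + n2^2) (n1^2 + n2^2)" using cF l by auto
    have Fc': "F (Suc (nm h)) \<in> carrier_mat (n1^2 + n2^2) (n1^2 + n2^2)" using cF l by auto
    have Ac: "AG (nm h) \<gamma> \<in> carrier_mat (n1^2 + n2^2) (n1^2 + n2^2)" using cAG l by auto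
    have "Phi (Inr \<gamma> # h) = N \<gamma> *\<^sub>v (F (nm h) *\<^sub>v x)" using Phi_R x by simp
    also have "\<dots> = (N \<gamma> * F (nm h)) *\<^sub>v x" using N_carrier Fc x by (subst assoc_mult_mat_vec) auto
    also have "\<dots> = (F (Suc (nm h)) * AG (nm h) \<gamma>) *\<^sub>v x" using cN l by simp
    also have "\<dots> = F (Suc (nm h)) *\<^sub>v (AG (nm h) \<gamma> *\<^sub>v x)" using Ac Fc' x by (subst assoc_mult_mat_vec) auto
    finally show ?case using Ac x by (intro bexI[of _ "AG (nm h) \<gamma> *\<^sub>v x"]) auto
  qed
  show ?L
  proof (intro allI impI)
    fix h :: "('s + 'g) list" assume hk: "nm h \<le> k"
    obtain x where x: "x \<in> carrier_vec (n1^2 + n2^2)" "Phi h = F (nm h) *\<^sub>v x" using reach[OF hk] by auto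
    have ec: "conjugate eta2 \<in> carrier_vec (n1^2 + n2^2)" unfolding eta2_def nn by auto
    show "conjugate eta2 \<bullet> Phi h = 0" unfolding x(2)
      using row_zero_prod[of "F (nm h)" "n1^2+n2^2" "conjugate eta2" x] cF ce hk x(1) ec
      unfolding eta2_def by auto
  qed
next
  assume L: ?L
  define G where "G l = Phi ` {h. nm h = l}" for l
  have Gc: "G l \<subseteq> carrier_vec (n1^2 + n2^2)" for l unfolding G_def using Phi_carrier by auto
  have P0: "Phi [] \<in> G 0" unfolding G_def by auto
  obtain F0 where F0: "F0 \<in> carrier_mat (n1^2 + n2^2) (n1^2 + n2^2)" "col F0 0 = Phi []"
    "\<forall>j<n1^2 + n2^2. col F0 j \<in> insert (0\<^sub>v (n1^2 + n2^2)) (G 0)"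
    "\<forall>g\<in>G 0. \<exists>x\<in>carrier_vec (n1^2 + n2^2). F0 *\<^sub>v x = g"
    using exists_basis_mat[OF Gc P0 Phi_nil_nz] by blast
  have "\<forall>l. \<exists>F. F \<in> carrier_mat (n1^2 + n2^2) (n1^2 + n2^2) \<and>
      (\<forall>j<n1^2 + n2^2. col F j \<in> insert (0\<^sub>v (n1^2 + n2^2)) (G l)) \<and>
      (\<forall>g\<in>G l. \<exists>x\<in>carrier_vec (n1^2 + n2^2). F *\<^sub>v x = g)"
    using exists_basis_mat2[OF Gc] by blast
  then obtain Fg where Fg: "\<forall>l. Fg l \<in> carrier_mat (n1^2 + n2^2) (n1^2 + n2^2) \<and>
      (\<forall>j<n1^2 + n2^2. col (Fg l) j \<in> insert (0\<^sub>v (n1^2 + n2^2)) (G l)) \<and>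
      (\<forall>g\<in>G l. \<exists>x\<in>carrier_vec (n1^2 + n2^2). Fg l *\<^sub>v x = g)"
    by - (drule choice, elim exE, rule that, assumption)
  define F where "F l = (if l = 0 then F0 else Fg l)" for l
  have PF: "F l \<in> carrier_mat (n1^2 + n2^2) (n1^2 + n2^2) \<and>
      (\<forall>j<n1^2 + n2^2. col (F l) j \<in> insert (0\<^sub>v (n1^2 + n2^2)) (G l)) \<and>
      (\<forall>g\<in>G l. \<exists>x\<in>carrier_vec (n1^2 + n2^2). F l *\<^sub>v x = g)" for l
    using F0 Fg unfolding F_def by (cases "l = 0") auto
  have Fc: "F l \<in> carrier_mat (n1^2 + n2^2) (n1^2 + n2^2)" for l using PF by auto
  have zz: "A *\<^sub>v 0\<^sub>v (n1^2 + n2^2) = 0\<^sub>v (n1^2 + n2^2)" if "A \<in> carrier_mat (n1^2 + n2^2) (n1^2 + n2^2)" for A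
    using that by (intro eq_vecI) auto
  have rng: "\<exists>x\<in>carrier_vec (n1^2 + n2^2). F l *\<^sub>v x = v" if "v \<in> insert (0\<^sub>v (n1^2 + n2^2)) (G l)" for v l
  proof (cases "v = 0\<^sub>v (n1^2 + n2^2)")
    case True thus ?thesis using zz[OF Fc] by (intro bexI[of _ "0\<^sub>v (n1^2 + n2^2)"]) auto
  next
    case False thus ?thesis using that PF by auto
  qed
  have ASex: "\<exists>A\<in>carrier_mat (n1^2 + n2^2) (n1^2 + n2^2). W \<sigma> * F l = F l * A" for \<sigma> l
  proof (rule solve_mat[OF Fc])
    show "W \<sigma> * F l \<in> carrier_mat (n1^2 + n2^2) (n1^2 + n2^2)" using W_carrier Fc by (rule mult_carrier_mat)
    show "\<forall>j<n1^2 + n2^2. \<exists>x\<in>carrier_vec (n1^2 + n2^2). F l *\<^sub>v x = col (W \<sigma> * F l) j"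
    proof (intro allI impI)
      fix j assume j: "j < n1^2 + n2^2"
      have cj: "col (W \<sigma> * F l) j = W \<sigma> *\<^sub>v col (F l) j" by (rule col_mult2[OF W_carrier Fc j])
      have "col (F l) j \<in> insert (0\<^sub>v (n1^2 + n2^2)) (G l)" using PF j by auto
      hence "W \<sigma> *\<^sub>v col (F l) j \<in> insert (0\<^sub>v (n1^2 + n2^2)) (G l)"
      proof
        assume "col (F l) j = 0\<^sub>v (n1^2 + n2^2)"
        thus ?thesis using zz[OF W_carrier] by simp
      next
        assume "col (F l) j \<in> G l"
        then obtain h where h: "nm h = l" "col (F l) j = Phi h" unfolding G_def by auto
        have "W \<sigma> *\<^sub>v col (F l) j = Phi (Inl \<sigma> # h)" using h Phi_L by simp
        moreover have "nm (Inl \<sigma> # h) = l" using h by simp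
        ultimately show ?thesis unfolding G_def by blast
      qed
      thus "\<exists>x\<in>carrier_vec (n1^2 + n2^2). F l *\<^sub>v x = col (W \<sigma> * F l) j" using rng cj by simp
    qed
  qed
  have AGex: "\<exists>A\<in>carrier_mat (n1^2 + n2^2) (n1^2 + n2^2). N \<gamma> * F l = F (Suc l) * A" for \<gamma> l
  proof (rule solve_mat[OF Fc])
    show "N \<gamma> * F l \<in> carrier_mat (n1^2 + n2^2) (n1^2 + n2^2)" using N_carrier Fc by (rule mult_carrier_mat)
    show "\<forall>j<n1^2 + n2^2. \<exists>x\<in>carrier_vec (n1^2 + n2^2). F (Suc l) *\<^sub>v x = col (N \<gamma> * F l) j"
    proof (intro allI impI)
      fix j assume j: "j < n1^2 + n2^2"
      have cj: "col (N \<gamma> * F l) j = N \<gamma> *\<^sub>v col (F l) j" by (rule col_mult2[OF N_carrier Fc j])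
      have "col (F l) j \<in> insert (0\<^sub>v (n1^2 + n2^2)) (G l)" using PF j by auto
      hence "N \<gamma> *\<^sub>v col (F l) j \<in> insert (0\<^sub>v (n1^2 + n2^2)) (G (Suc l))"
      proof
        assume "col (F l) j = 0\<^sub>v (n1^2 + n2^2)"
        thus ?thesis using zz[OF N_carrier] by simp
      next
        assume "col (F l) j \<in> G l"
        then obtain h where h: "nm h = l" "col (F l) j = Phi h" unfolding G_def by auto
        have "N \<gamma> *\<^sub>v col (F l) j = Phi (Inr \<gamma> # h)" using h Phi_R by simp
        moreover have "nm (Inr \<gamma> # h) = Suc l" using h by simp
        ultimately show ?thesis unfolding G_def by blast
      qed
      thus "\<exists>x\<in>carrier_vec (n1^2 + n2^2). F (Suc l) *\<^sub>v x = col (N \<gamma> * F l) j" using rng cj by simp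
    qed
  qed
  define AS where "AS l \<sigma> = (SOME A. A \<in> carrier_mat (n1^2 + n2^2) (n1^2 + n2^2) \<and> W \<sigma> * F l = F l * A)" for l \<sigma>
  define AG where "AG l \<gamma> = (SOME A. A \<in> carrier_mat (n1^2 + n2^2) (n1^2 + n2^2) \<and> N \<gamma> * F l = F (Suc l) * A)" for l \<gamma>
  have AS: "AS l \<sigma> \<in> carrier_mat (n1^2 + n2^2) (n1^2 + n2^2) \<and> W \<sigma> * F l = F l * AS l \<sigma>" for l \<sigma>
    unfolding AS_def using someI_ex[OF ASex[of \<sigma> l, unfolded Bex_def]] .
  have AG: "AG l \<gamma> \<in> carrier_mat (n1^2 + n2^2) (n1^2 + n2^2) \<and> N \<gamma> * F l = F (Suc l) * AG l \<gamma>" for l \<gamma>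
    unfolding AG_def using someI_ex[OF AGex[of \<gamma> l, unfolded Bex_def]] .
  have ec: "conjugate (eta n1 @\<^sub>v (- eta n2)) \<in> carrier_vec (n1^2 + n2^2)" unfolding nn by auto
  have orth: "mat_of_row (conjugate (eta n1 @\<^sub>v (- eta n2))) * F l = 0\<^sub>m 1 (n1^2 + n2^2)" if lk: "l \<le> k" for l
  proof (rule eq_matI)
    fix i j assume i: "i < dim_row (0\<^sub>m 1 (n1^2 + n2^2) :: complex mat)" and j: "j < dim_col (0\<^sub>m 1 (n1^2 + n2^2) :: complex mat)"
    hence i0: "i = 0" and j': "j < n1^2 + n2^2" by auto
    have "(mat_of_row (conjugate (eta n1 @\<^sub>v (- eta n2))) * F l) $$ (i, j)
        = conjugate (eta n1 @\<^sub>v (- eta n2)) \<bullet> col (F l) j"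
      using i0 j' Fc[of l] by simp
    also have "\<dots> = 0"
    proof -
      have "col (F l) j \<in> insert (0\<^sub>v (n1^2 + n2^2)) (G l)" using PF j' by auto
      thus ?thesis
      proof
        assume "col (F l) j = 0\<^sub>v (n1^2 + n2^2)"
        thus ?thesis using ec by simp
      next
        assume "col (F l) j \<in> G l"
        then obtain h where h: "nm h = l" "col (F l) j = Phi h" unfolding G_def by auto
        thus ?thesis using L lk unfolding eta2_def by auto
      qed
    qed
    finally show "(mat_of_row (conjugate (eta n1 @\<^sub>v (- eta n2))) * F l) $$ (i, j) = 0\<^sub>m 1 (n1^2 + n2^2) $$ (i, j)"
      using i0 j' by simp
  qed (insert Fc[of l], auto)
  have c0: "col (F 0) 0 = vectorize n1 \<rho>1 @\<^sub>v vectorize n2 \<rho>2" using F0 Phi_nil unfolding F_def by simp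
  have AS1: "\<forall>\<sigma>. \<forall>l \<le> k. block_diag (hat n1 (U1 \<sigma>)) (hat n2 (U2 \<sigma>)) * F l = F l * AS l \<sigma>"
    using AS unfolding W_def by blast
  have AG1: "\<forall>\<gamma>. \<forall>l < k. block_diag (hat n1 (M1 \<gamma>)) (hat n2 (M2 \<gamma>)) * F l = F (Suc l) * AG l \<gamma>"
    using AG unfolding N_def by blast
  have ASc: "\<forall>l \<le> k. \<forall>\<sigma>. AS l \<sigma> \<in> carrier_mat (n1^2 + n2^2) (n1^2 + n2^2)" using AS by blast
  have AGc: "\<forall>l < k. \<forall>\<gamma>. AG l \<gamma> \<in> carrier_mat (n1^2 + n2^2) (n1^2 + n2^2)" using AG by blast
  have Fc1: "\<forall>l \<le> k. F l \<in> carrier_mat (n1^2 + n2^2) (n1^2 + n2^2)" using Fc by blast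
  have orth1: "\<forall>l \<le> k. mat_of_row (conjugate (eta n1 @\<^sub>v (- eta n2))) * F l = 0\<^sub>m 1 (n1^2 + n2^2)"
    using orth by blast
  show ?R
    apply (rule exI[of _ F], rule exI[of _ AS], rule exI[of _ AG])
    using Fc1 ASc AGc c0 orth1 AS1 AG1 by (intro conjI)
qed

end

theorem proposition1:
  fixes n1 n2 k :: nat
    and U1 U2 :: "'s::finite \<Rightarrow> complex mat"
    and M1 M2 :: "'g::finite \<Rightarrow> complex mat"
    and \<rho>1 \<rho>2 :: "complex mat"
  assumes "qmm n1 U1 M1" and "qmm n2 U2 M2"
    and "density_op n1 \<rho>1" and "density_op n2 \<rho>2"
    and "k > 0"
  shows "k_equiv k n1 U1 M1 \<rho>1 n2 U2 M2 \<rho>2 \<longleftrightarrow>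
    (let n = n1^2 + n2^2; \<eta> = eta n1 @\<^sub>v (- eta n2) in
     \<exists>(F :: nat \<Rightarrow> complex mat) (AS :: nat \<Rightarrow> 's \<Rightarrow> complex mat) (AG :: nat \<Rightarrow> 'g \<Rightarrow> complex mat).
       (\<forall>l \<le> k. F l \<in> carrier_mat n n) \<and>
       (\<forall>l \<le> k. \<forall>\<sigma>. AS l \<sigma> \<in> carrier_mat n n) \<and>
       (\<forall>l < k. \<forall>\<gamma>. AG l \<gamma> \<in> carrier_mat n n) \<and>
       col (F 0) 0 = vectorize n1 \<rho>1 @\<^sub>v vectorize n2 \<rho>2 \<and>
       (\<forall>l \<le> k. mat_of_row (conjugate \<eta>) * F l = 0\<^sub>m 1 n) \<and>
       (\<forall>\<sigma>. \<forall>l \<le> k. block_diag (hat n1 (U1 \<sigma>)) (hat n2 (U2 \<sigma>)) * F l = F l * AS l \<sigma>) \<and>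
       (\<forall>\<gamma>. \<forall>l < k. block_diag (hat n1 (M1 \<gamma>)) (hat n2 (M2 \<gamma>)) * F l = F (Suc l) * AG l \<gamma>))"
proof -
  have g1: "good U1 M1 n1" using assms(1) unfolding qmm_def good_def unitary_op_def by auto
  have g2: "good U2 M2 n2" using assms(2) unfolding qmm_def good_def unitary_op_def by auto
  have r1: "\<rho>1 \<in> carrier_mat n1 n1" "mtrace \<rho>1 = 1" using assms(3) unfolding density_op_def by auto
  have r2: "\<rho>2 \<in> carrier_mat n2 n2" using assms(4) unfolding density_op_def by auto
  interpret two U1 M1 n1 \<rho>1 U2 M2 n2 \<rho>2
    using g1 g2 r1 r2 by unfold_locales auto
  show ?thesis unfolding Let_def keq_iff[of k] main_iff[of k] ..
qed


end
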